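(* Let $Z\subseteq\{0,1\}^n$ and $$X=\{(\bm x,\bm z)\in\mathbb R^n\times Z:\ \|\bm x\|_2^2\le 1,\ x_i(1-z_i)=0\ \text{for } i=1,\dots,n\}.$$ Then $$\operatorname{conv}(X)=\bigcap_{\bm\alpha\in\mathbb R^n}P(\bm\alpha).$$
   Context: For $\bm\alpha\in\mathbb R^n$, $P_0(\bm\alpha)=\{(\bm x,\bm z)\in\mathbb R^n\times Z:\ \sum_{i=1}^n|\alpha_ix_i|\le\sqrt{\sum_{i=1}^n\alpha_i^2z_i}\}$ and $P(\bm\alpha)=\operatorname{conv}(P_0(\bm\alpha))$, the convex hull. *)

theory Defs
  imports "HOL-Analysis.Analysis"
begin

definition P0 :: "(real^'n::finite) set \<Rightarrow> real^'n \<Rightarrow> ((real^'n) \<times> (real^'n)) set" where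
  "P0 Z \<alpha> = {(x, z). z \<in> Z \<and>
      (\<Sum>i\<in>UNIV. \<bar>\<alpha>$i * x$i\<bar>) \<le> sqrt (\<Sum>i\<in>UNIV. (\<alpha>$i)\<^sup>2 * z$i)}"

definition P :: "(real^'n::finite) set \<Rightarrow> real^'n \<Rightarrow> ((real^'n) \<times> (real^'n)) set" where
  "P Z \<alpha> = convex hull (P0 Z \<alpha>)"

end

theory Submission
  imports Defs
begin

lemma X_sub_P0:
  fixes Z :: "(real^'n) set"
  assumes Z: "Z \<subseteq> {z. \<forall>i. z$i = 0 \<or> z$i = 1}"
    and zZ: "z \<in> Z" and xn: "(\<Sum>i\<in>UNIV. (x$i)\<^sup>2) \<le> 1"
    and xz: "\<forall>i. x$i * (1 - z$i) = 0"
  shows "(\<Sum>i\<in>UNIV. \<bar>\<alpha>$i * x$i\<bar>) \<le> sqrt (\<Sum>i\<in>UNIV. (\<alpha>$i)\<^sup>2 * z$i)"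
proof -
  define u :: "real^'n" where "u = (\<chi> i. \<bar>\<alpha>$i\<bar> * z$i)"
  define v :: "real^'n" where "v = (\<chi> i. \<bar>x$i\<bar>)"
  have z01: "\<And>i. z$i = 0 \<or> z$i = 1" using Z zZ by auto
  have nv: "norm v \<le> 1"
  proof -
    have "norm v = sqrt (\<Sum>i\<in>UNIV. (x$i)\<^sup>2)"
      unfolding norm_eq_sqrt_inner inner_vec_def v_def
      by (simp add: power2_eq_square)
    with xn show ?thesis by simp
  qed
  have S0: "0 \<le> (\<Sum>i\<in>UNIV. (\<alpha>$i)\<^sup>2 * z$i)"
    by (intro sum_nonneg) (metis z01 mult_zero_right mult_1_right zero_le_power2 order_refl)
  have "(\<Sum>i\<in>UNIV. \<bar>\<alpha>$i * x$i\<bar>) = inner u v"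
    unfolding inner_vec_def u_def v_def
  proof (rule sum.cong)
    fix i
    show "\<bar>\<alpha>$i * x$i\<bar> = inner ((\<chi> i. \<bar>\<alpha>$i\<bar> * z$i) $ i) ((\<chi> i. \<bar>x$i\<bar>) $ i)"
      using z01[of i] xz[rule_format, of i] by (auto simp: abs_mult)
  qed simp
  also have "\<dots> \<le> norm u * norm v" by (rule norm_cauchy_schwarz)
  also have "norm u = sqrt (\<Sum>i\<in>UNIV. (\<alpha>$i)\<^sup>2 * z$i)"
    unfolding norm_eq_sqrt_inner inner_vec_def u_def
  proof (rule arg_cong[where f=sqrt], rule sum.cong)
    fix i show "inner ((\<chi> i. \<bar>\<alpha>$i\<bar> * z$i) $ i) ((\<chi> i. \<bar>\<alpha>$i\<bar> * z$i) $ i) = (\<alpha>$i)\<^sup>2 * z$i"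
      using z01[of i] by (auto simp: power2_eq_square)
  qed simp
  also have "sqrt (\<Sum>i\<in>UNIV. (\<alpha>$i)\<^sup>2 * z$i) * norm v \<le> sqrt (\<Sum>i\<in>UNIV. (\<alpha>$i)\<^sup>2 * z$i)"
    using nv S0 by (intro mult_left_le) auto
  finally show ?thesis .
qed

lemma X_compact:
  fixes Z :: "(real^'n) set"
  assumes Z: "Z \<subseteq> {z. \<forall>i. z$i = 0 \<or> z$i = 1}"
  shows "compact {(x, z). z \<in> Z \<and> (\<Sum>i\<in>UNIV. (x$i)\<^sup>2) \<le> 1 \<and>
                (\<forall>i. x$i * (1 - z$i) = 0)}" (is "compact ?X")
proof -
  have fin: "finite Z"
  proof (rule finite_subset[OF Z])
    have "{z::real^'n. \<forall>i. z$i = 0 \<or> z$i = 1} \<subseteq> (\<lambda>f. \<chi> i. f i) ` PiE UNIV (\<lambda>_. {0,1})"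
    proof
      fix z :: "real^'n" assume "z \<in> {z. \<forall>i. z$i = 0 \<or> z$i = 1}"
      then have "(\<lambda>i. z$i) \<in> PiE UNIV (\<lambda>_. {0,1})" by auto
      then show "z \<in> (\<lambda>f. \<chi> i. f i) ` PiE UNIV (\<lambda>_. {0,1})"
        by (intro image_eqI[where x="\<lambda>i. z$i"]) auto
    qed
    moreover have "finite (PiE (UNIV::'n set) (\<lambda>_. {0::real,1}))"
      by (intro finite_PiE) auto
    ultimately show "finite {z::real^'n. \<forall>i. z$i = 0 \<or> z$i = 1}"
      using finite_subset by blast
  qed
  have eq: "?X = {p. (\<Sum>i\<in>UNIV. (fst p$i)\<^sup>2) \<le> 1 \<and> (\<forall>i. fst p$i * (1 - snd p$i) = 0)}
      \<inter> (UNIV \<times> Z)" by auto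
  have c1: "closed {p::(real^'n)\<times>(real^'n). (\<Sum>i\<in>UNIV. (fst p$i)\<^sup>2) \<le> 1 \<and> (\<forall>i. fst p$i * (1 - snd p$i) = 0)}"
    by (intro closed_Collect_conj closed_Collect_all closed_Collect_le closed_Collect_eq
        continuous_intros)
  have c2: "closed (UNIV \<times> Z)"
    using fin by (intro closed_Times) (auto simp: finite_imp_closed)
  have cl: "closed ?X" unfolding eq using c1 c2 by blast
  have "?X \<subseteq> cball 0 1 \<times> Z"
  proof clarsimp
    fix x :: "real^'n" assume "(\<Sum>i\<in>UNIV. (x$i)\<^sup>2) \<le> 1"
    moreover have "norm x = sqrt (\<Sum>i\<in>UNIV. (x$i)\<^sup>2)"
      unfolding norm_eq_sqrt_inner inner_vec_def by (simp add: power2_eq_square)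
    ultimately show "norm x \<le> 1" by simp
  qed
  moreover have "bounded (cball (0::real^'n) 1 \<times> Z)"
    using fin by (intro bounded_Times) (auto simp: finite_imp_bounded)
  ultimately have "bounded ?X" using bounded_subset by blast
  with cl show ?thesis by (simp add: compact_eq_bounded_closed)
qed

theorem theorem1:
  fixes Z :: "(real^'n) set"
  assumes "Z \<subseteq> {z. \<forall>i. z$i = 0 \<or> z$i = 1}"
  shows "convex hull {(x, z). z \<in> Z \<and> (\<Sum>i\<in>UNIV. (x$i)\<^sup>2) \<le> 1 \<and>
                (\<forall>i. x$i * (1 - z$i) = 0)}
         = (\<Inter>\<alpha>\<in>UNIV. P Z \<alpha>)" (is "convex hull ?X = _")
proof
  show "convex hull ?X \<subseteq> (\<Inter>\<alpha>\<in>UNIV. P Z \<alpha>)"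
  proof (intro INT_greatest)
    fix \<alpha>
    have "?X \<subseteq> P0 Z \<alpha>"
    proof
      fix p assume "p \<in> ?X"
      then obtain x z where p: "p = (x, z)" and zZ: "z \<in> Z"
        and xn: "(\<Sum>i\<in>UNIV. (x$i)\<^sup>2) \<le> 1" and xz: "\<forall>i. x$i * (1 - z$i) = 0"
        by blast
      show "p \<in> P0 Z \<alpha>" unfolding P0_def p
        using X_sub_P0[OF assms zZ xn xz, of \<alpha>] zZ by simp
    qed
    then have "?X \<subseteq> P Z \<alpha>" unfolding P_def using hull_subset[of "P0 Z \<alpha>" convex] by (rule order_trans)
    then show "convex hull ?X \<subseteq> P Z \<alpha>"
      unfolding P_def by (intro hull_minimal) (auto simp: convex_convex_hull)
  qed
next
  show "(\<Inter>\<alpha>\<in>UNIV. P Z \<alpha>) \<subseteq> convex hull ?X"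
  proof
    fix y assume yin: "y \<in> (\<Inter>\<alpha>\<in>UNIV. P Z \<alpha>)"
    show "y \<in> convex hull ?X"
    proof (rule ccontr)
      assume ny: "y \<notin> convex hull ?X"
      have "closed (convex hull ?X)"
        using compact_convex_hull[OF X_compact[OF assms]] compact_imp_closed by blast
      from separating_hyperplane_closed_point[OF convex_convex_hull this ny]
      obtain w c where wy: "inner w y < c" and wX: "\<forall>p\<in>convex hull ?X. inner w p > c"
        by blast
      obtain a b where wab: "w = (a, b)" by (cases w)
      have z01: "\<And>z i. z \<in> Z \<Longrightarrow> z$i = 0 \<or> z$i = 1" using assms by auto
      have key: "inner w (x', z') > c" if "(x', z') \<in> P0 Z a" for x' z'
      proof -
        have zZ: "z' \<in> Z" and le: "(\<Sum>i\<in>UNIV. \<bar>a$i * x'$i\<bar>) \<le> sqrt (\<Sum>i\<in>UNIV. (a$i)\<^sup>2 * z'$i)"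
          using that unfolding P0_def by auto
        define S where "S = (\<Sum>i\<in>UNIV. (a$i)\<^sup>2 * z'$i)"
        define s where "s = sqrt S"
        have S0: "S \<ge> 0" unfolding S_def using z01[OF zZ] 
          by (intro sum_nonneg) (metis z01[OF zZ] mult_zero_right mult_1_right zero_le_power2 order_refl)
        have ss: "s * s = S" unfolding s_def using S0 by simp
        define y0 :: "real^'n" where "y0 = (\<chi> i. - a$i * z'$i / s)"
        have sq: "(\<Sum>i\<in>UNIV. (y0$i)\<^sup>2) = S / (s * s)"
          unfolding y0_def S_def sum_divide_distrib
          by (intro sum.cong refl) (use z01[OF zZ] in \<open>auto simp: power2_eq_square\<close>)
        have "(\<Sum>i\<in>UNIV. (y0$i)\<^sup>2) \<le> 1"
          unfolding sq ss by (cases "S = 0") auto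
        moreover have "\<forall>i. y0$i * (1 - z'$i) = 0"
          unfolding y0_def using z01[OF zZ] by auto
        ultimately have "(y0, z') \<in> ?X" using zZ by auto
        then have "(y0, z') \<in> convex hull ?X" by (rule hull_inc)
        with wX have gt: "inner w (y0, z') > c" by blast
        have ay0: "inner a y0 = - S / s"
          unfolding inner_vec_def y0_def S_def
          by (simp add: sum_divide_distrib sum_negf power2_eq_square algebra_simps)
        have "- S / s = - s"
        proof (cases "s = 0")
          case True then show ?thesis using ss by simp
        next
          case False then show ?thesis using ss[symmetric] by (simp add: field_simps)
        qed
        then have ay02: "inner a y0 = - s" using ay0 by simp
        have "inner a x' \<ge> - (\<Sum>i\<in>UNIV. \<bar>a$i * x'$i\<bar>)"
        proof -
          have "- inner a x' = (\<Sum>i\<in>UNIV. - (a$i * x'$i))"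
            unfolding inner_vec_def by (simp add: sum_negf)
          also have "\<dots> \<le> (\<Sum>i\<in>UNIV. \<bar>a$i * x'$i\<bar>)" by (intro sum_mono) simp
          finally show ?thesis by simp
        qed
        with le have "inner a x' \<ge> inner a y0" unfolding ay02 s_def S_def by simp
        then have "inner w (x', z') \<ge> inner w (y0, z')" unfolding wab by simp
        with gt show ?thesis by simp
      qed
      have "P0 Z a \<subseteq> {p. inner w p > c}" using key by auto
      moreover have "convex {p. inner w p > c}" by (rule convex_halfspace_gt)
      ultimately have "P Z a \<subseteq> {p. inner w p > c}"
        unfolding P_def by (intro hull_minimal)
      moreover have "y \<in> P Z a" using yin by blast
      ultimately show False using wy by auto
    qed
  qed
qed

end
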